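(* Let $(D,\mathrm{left},\mathrm{right})$ be an interval domain and $p,q\in\max(D)$. (i) If $S\subseteq[p,\cdot]$ is directed, then $\mathrm{right}(\bigsqcup S)=\bigwedge_{s\in S}\mathrm{right}(s)$, the infimum taken in $(\max(D),\le)$. (ii) If $S\subseteq[\cdot,q]$ is directed, then $\mathrm{left}(\bigsqcup S)=\bigvee_{s\in S}\mathrm{left}(s)$, the supremum taken in $(\max(D),\le)$.
   Context: For a poset $(P,\sqsubseteq)$: directed sets are nonempty sets in which any two elements have an upper bound in the set; $\bigsqcup S$ is the supremum; $x\ll y$ iff for every directed $S\subseteq P$ with a supremum, $y\sqsubseteq\bigsqcup S$ implies $x\sqsubseteq s$ for some $s\in S$; $\Uparrow x=\{a: x\ll a\}$, $\Downarrow x=\{a:a\ll x\}$. $P$ is continuous if there is $B\subseteq P$ such that for each $x$, $B\cap\Downarrow x$ contains a directed set with supremum $x$; a continuous dcpo is a continuous poset in which every directed set has a supremum. $\max(P)$ is the set of maximal elements, $x\sqcap y$ the infimum of $\{x,y\}$. The Scott topology consists of upper sets $U$ such that $\bigsqcup S\in U$ implies $S\cap U\ne\emptyset$ for directed $S$. An interval poset is a poset $D$ with functions $\mathrm{left},\mathrm{right}:D\to\max(D)$ such that (only named infima are assumed to exist): (i) $x=\mathrm{left}(x)\sqcap\mathrm{right}(x)$ for all $x$; (ii) if $\mathrm{right}(x)=\mathrm{left}(y)$ then $\mathrm{left}(x\sqcap y)=\mathrm{left}(x)$ and $\mathrm{right}(x\sqcap y)=\mathrm{right}(y)$; (iii)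 for $p\in\max(D)$ with $x\sqsubseteq p$: $\mathrm{left}(\mathrm{left}(x)\sqcap p)=\mathrm{left}(x)$, $\mathrm{right}(\mathrm{left}(x)\sqcap p)=p$, $\mathrm{left}(p\sqcap\mathrm{right}(x))=p$, $\mathrm{right}(p\sqcap\mathrm{right}(x))=\mathrm{right}(x)$. On $\max(D)$ define $a\le b$ iff $a=\mathrm{left}(z)$, $b=\mathrm{right}(z)$ for some $z\in D$; this is a partial order. For $p,q\in\max(D)$ let $[p,\cdot]=\mathrm{left}^{-1}(p)$ and $[\cdot,q]=\mathrm{right}^{-1}(q)$, regarded as subposets of $D$. An interval domain is an interval poset $(D,\mathrm{left},\mathrm{right})$ such that $D$ is a continuous dcpo and: (i) if $p\in\Uparrow x\cap\max(D)$ then $\Uparrow(\mathrm{left}(x)\sqcap p)\ne\emptyset$ and $\Uparrow(p\sqcap\mathrm{right}(x))\ne\emptyset$; (ii) for all $x\in D$ the following are equivalent: (a) $\Uparrow x\ne\emptyset$; (b) for all $y\in[\mathrm{left}(x),\cdot]$ with $y\sqsubseteq x$, $y\ll\mathrm{right}(y)$ in the poset $[\cdot,\mathrm{right}(y)]$; (c) for all $y\in[\cdot,\mathrm{right}(x)]$ with $y\sqsubseteq x$, $y\ll\mathrm{left}(y)$ in the poset $[\mathrm{left}(y),\cdot]$; (iii)(a) for every directed $S\subseteq[p,\cdot]$, $\mathrm{left}(\bigsqcup S)=p$ and $\mathrm{right}(\bigsqcup S)=\mathrm{right}(\bigsqcup T)$ for every directed $T\subseteq[q,\cdot]$ with $\mathrm{right}(T)=\mathrm{right}(S)$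 (images); (iii)(b) for every directed $S\subseteq[\cdot,q]$, $\mathrm{right}(\bigsqcup S)=q$ and $\mathrm{left}(\bigsqcup S)=\mathrm{left}(\bigsqcup T)$ for every directed $T\subseteq[\cdot,p]$ with $\mathrm{left}(T)=\mathrm{left}(S)$; (iv) for all $x\in D$, $\{y\in\max(D): x\sqsubseteq y\}$ is compact in the relative Scott topology. *)

theory Defs
  imports Main
begin

text \<open>The poset D is modelled as a type of class order (D = UNIV).
  Subposets are given by carrier sets P, with the induced order.\<close>

definition directed :: "'a::order set \<Rightarrow> bool" where
  "directed S \<longleftrightarrow> S \<noteq> {} \<and> (\<forall>x\<in>S. \<forall>y\<in>S. \<exists>z\<in>S. x \<le> z \<and> y \<le> z)"

definition is_lub_in :: "'a::order set \<Rightarrow> 'a set \<Rightarrow> 'a \<Rightarrow> bool" where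
  "is_lub_in P S u \<longleftrightarrow> u \<in> P \<and> (\<forall>s\<in>S. s \<le> u) \<and> (\<forall>v\<in>P. (\<forall>s\<in>S. s \<le> v) \<longrightarrow> u \<le> v)"

definition is_glb_in :: "'a::order set \<Rightarrow> 'a set \<Rightarrow> 'a \<Rightarrow> bool" where
  "is_glb_in P S u \<longleftrightarrow> u \<in> P \<and> (\<forall>s\<in>S. u \<le> s) \<and> (\<forall>v\<in>P. (\<forall>s\<in>S. v \<le> s) \<longrightarrow> v \<le> u)"

definition dsup :: "'a::order set \<Rightarrow> 'a" where
  "dsup S = (THE u. is_lub_in UNIV S u)"

text \<open>infimum of {x,y} in D (only meaningful when it exists)\<close>
definition has_meet :: "'a::order \<Rightarrow> 'a \<Rightarrow> bool" where
  "has_meet x y \<longleftrightarrow> (\<exists>m. is_glb_in UNIV {x, y} m)"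

definition meet :: "'a::order \<Rightarrow> 'a \<Rightarrow> 'a" where
  "meet x y = (THE m. is_glb_in UNIV {x, y} m)"

definition way_below_in :: "'a::order set \<Rightarrow> 'a \<Rightarrow> 'a \<Rightarrow> bool" where
  "way_below_in P x y \<longleftrightarrow>
     (\<forall>S. S \<subseteq> P \<longrightarrow> directed S \<longrightarrow>
        (\<forall>u. is_lub_in P S u \<longrightarrow> y \<le> u \<longrightarrow> (\<exists>s\<in>S. x \<le> s)))"

definition way_below :: "'a::order \<Rightarrow> 'a \<Rightarrow> bool" where
  "way_below x y \<longleftrightarrow> way_below_in UNIV x y"

definition Uparrow :: "'a::order \<Rightarrow> 'a set" where
  "Uparrow x = {a. way_below x a}"

definition Downarrow :: "'a::order \<Rightarrow> 'a set" where
  "Downarrow x = {a. way_below a x}"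

definition continuous_poset :: "'a::order set \<Rightarrow> bool" where
  "continuous_poset P \<longleftrightarrow>
     (\<exists>B\<subseteq>P. \<forall>x\<in>P. \<exists>S. S \<subseteq> B \<inter> Downarrow x \<and> directed S \<and> is_lub_in P S x)"

definition dcpo :: "'a::order set \<Rightarrow> bool" where
  "dcpo P \<longleftrightarrow> (\<forall>S. S \<subseteq> P \<longrightarrow> directed S \<longrightarrow> (\<exists>u. is_lub_in P S u))"

definition maxD :: "'a::order set" where
  "maxD = {x. \<forall>y. x \<le> y \<longrightarrow> y = x}"

definition scott_open :: "'a::order set \<Rightarrow> bool" where
  "scott_open U \<longleftrightarrow> (\<forall>x y. x \<in> U \<longrightarrow> x \<le> y \<longrightarrow> y \<in> U) \<and>
     (\<forall>S. directed S \<longrightarrow> dsup S \<in> U \<longrightarrow> S \<inter> U \<noteq> {})"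

definition scott_compact :: "'a::order set \<Rightarrow> bool" where
  "scott_compact K \<longleftrightarrow>
     (\<forall>\<U>. (\<forall>U\<in>\<U>. scott_open U) \<longrightarrow> K \<subseteq> \<Union>\<U> \<longrightarrow> (\<exists>\<F>\<subseteq>\<U>. finite \<F> \<and> K \<subseteq> \<Union>\<F>))"

definition interval_poset :: "('a::order \<Rightarrow> 'a) \<Rightarrow> ('a \<Rightarrow> 'a) \<Rightarrow> bool" where
  "interval_poset left right \<longleftrightarrow>
     (\<forall>x. left x \<in> maxD \<and> right x \<in> maxD) \<and>
     (\<forall>x. is_glb_in UNIV {left x, right x} x) \<and>
     (\<forall>x y. right x = left y \<longrightarrow>
        has_meet x y \<and> left (meet x y) = left x \<and> right (meet x y) = right y) \<and>
     (\<forall>x p. p \<in> maxD \<longrightarrow> x \<le> p \<longrightarrow>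
        has_meet (left x) p \<and> left (meet (left x) p) = left x \<and> right (meet (left x) p) = p \<and>
        has_meet p (right x) \<and> left (meet p (right x)) = p \<and> right (meet p (right x)) = right x)"

definition max_le :: "('a::order \<Rightarrow> 'a) \<Rightarrow> ('a \<Rightarrow> 'a) \<Rightarrow> 'a \<Rightarrow> 'a \<Rightarrow> bool" where
  "max_le left right a b \<longleftrightarrow> a \<in> maxD \<and> b \<in> maxD \<and> (\<exists>z. a = left z \<and> b = right z)"

definition interval_domain :: "('a::order \<Rightarrow> 'a) \<Rightarrow> ('a \<Rightarrow> 'a) \<Rightarrow> bool" where
  "interval_domain (left::'a::order \<Rightarrow> 'a) right \<longleftrightarrow>
     interval_poset left right \<and> continuous_poset (UNIV::'a set) \<and> dcpo (UNIV::'a set) \<and>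
     \<comment> \<open>(i)\<close>
     (\<forall>x p. p \<in> Uparrow x \<inter> maxD \<longrightarrow>
        Uparrow (meet (left x) p) \<noteq> {} \<and> Uparrow (meet p (right x)) \<noteq> {}) \<and>
     \<comment> \<open>(ii)\<close>
     (\<forall>x. (Uparrow x \<noteq> {} \<longleftrightarrow>
            (\<forall>y. left y = left x \<longrightarrow> y \<le> x \<longrightarrow>
               way_below_in (right -` {right y}) y (right y))) \<and>
          (Uparrow x \<noteq> {} \<longleftrightarrow>
            (\<forall>y. right y = right x \<longrightarrow> y \<le> x \<longrightarrow>
               way_below_in (left -` {left y}) y (left y)))) \<and>
     \<comment> \<open>(iii)(a)\<close>
     (\<forall>p\<in>maxD. \<forall>S. S \<subseteq> left -` {p} \<longrightarrow> directed S \<longrightarrow>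
        left (dsup S) = p \<and>
        (\<forall>q\<in>maxD. \<forall>T. T \<subseteq> left -` {q} \<longrightarrow> directed T \<longrightarrow> right ` T = right ` S \<longrightarrow>
           right (dsup S) = right (dsup T))) \<and>
     \<comment> \<open>(iii)(b)\<close>
     (\<forall>q\<in>maxD. \<forall>S. S \<subseteq> right -` {q} \<longrightarrow> directed S \<longrightarrow>
        right (dsup S) = q \<and>
        (\<forall>p\<in>maxD. \<forall>T. T \<subseteq> right -` {p} \<longrightarrow> directed T \<longrightarrow> left ` T = left ` S \<longrightarrow>
           left (dsup S) = left (dsup T))) \<and>
     \<comment> \<open>(iv)\<close>
     (\<forall>x::'a. scott_compact {y \<in> maxD. x \<le> y})"

definition max_inf :: "('a::order \<Rightarrow> 'a) \<Rightarrow> ('a \<Rightarrow> 'a) \<Rightarrow> 'a set \<Rightarrow> 'a \<Rightarrow> bool" where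
  "max_inf left right A m \<longleftrightarrow> m \<in> maxD \<and> (\<forall>a\<in>A. max_le left right m a) \<and>
     (\<forall>n\<in>maxD. (\<forall>a\<in>A. max_le left right n a) \<longrightarrow> max_le left right n m)"

definition max_sup :: "('a::order \<Rightarrow> 'a) \<Rightarrow> ('a \<Rightarrow> 'a) \<Rightarrow> 'a set \<Rightarrow> 'a \<Rightarrow> bool" where
  "max_sup left right A m \<longleftrightarrow> m \<in> maxD \<and> (\<forall>a\<in>A. max_le left right a m) \<and>
     (\<forall>n\<in>maxD. (\<forall>a\<in>A. max_le left right a n) \<longrightarrow> max_le left right m n)"

end

theory Submission
  imports Defs
begin

lemma glb_unique: "is_glb_in UNIV {a,b} m \<Longrightarrow> meet a b = m"
  unfolding meet_def
proof (rule the_equality)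
  fix m' assume h: "is_glb_in UNIV {a,b} m'" and g: "is_glb_in UNIV {a,b} m"
  from h g have "m' \<le> m" unfolding is_glb_in_def by blast
  moreover from h g have "m \<le> m'" unfolding is_glb_in_def by blast
  ultimately show "m' = m" by (rule order_antisym)
qed
lemma lub_unique: "is_lub_in UNIV S u \<Longrightarrow> dsup S = u"
  unfolding dsup_def
proof (rule the_equality)
  fix m' assume h: "is_lub_in UNIV S m'" and g: "is_lub_in UNIV S u"
  from h g have "m' \<le> u" unfolding is_lub_in_def by blast
  moreover from h g have "u \<le> m'" unfolding is_lub_in_def by blast
  ultimately show "m' = u" by (rule order_antisym)
qed
lemma meet_le1: "has_meet a b \<Longrightarrow> meet a b \<le> a"
proof -
  assume "has_meet a b"
  then obtain m where m: "is_glb_in UNIV {a,b} m" unfolding has_meet_def by blast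
  then have "meet a b = m" by (rule glb_unique)
  with m show ?thesis unfolding is_glb_in_def by simp
qed
lemma meet_le2: "has_meet a b \<Longrightarrow> meet a b \<le> b"
proof -
  assume "has_meet a b"
  then obtain m where m: "is_glb_in UNIV {a,b} m" unfolding has_meet_def by blast
  then have "meet a b = m" by (rule glb_unique)
  with m show ?thesis unfolding is_glb_in_def by simp
qed
lemma ip_glb: "interval_poset left right \<Longrightarrow> meet (left z) (right z) = z"
  unfolding interval_poset_def by (elim conjE) (rule glb_unique, blast)
lemma ip_meet_eq: "interval_poset left right \<Longrightarrow> left z = a \<Longrightarrow> right z = b \<Longrightarrow> meet a b = z"
  using ip_glb by blast
lemma ip_max: "interval_poset left right \<Longrightarrow> left x \<in> maxD \<and> right x \<in> maxD"
  unfolding interval_poset_def by (elim conjE) blast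
lemma ip_le: "interval_poset left right \<Longrightarrow> x \<le> left x \<and> x \<le> right x"
proof -
  assume "interval_poset left right"
  then have "is_glb_in UNIV {left x, right x} x" unfolding interval_poset_def by (elim conjE) blast
  then show ?thesis unfolding is_glb_in_def by simp
qed

lemma ip_comp: "interval_poset left right \<Longrightarrow> right x = left y \<Longrightarrow>
   has_meet x y \<and> left (meet x y) = left x \<and> right (meet x y) = right y"
  unfolding interval_poset_def by (elim conjE) blast
lemma ip_3: "interval_poset left right \<Longrightarrow> p \<in> maxD \<Longrightarrow> x \<le> p \<Longrightarrow>
        has_meet (left x) p \<and> left (meet (left x) p) = left x \<and> right (meet (left x) p) = p \<and>
        has_meet p (right x) \<and> left (meet p (right x)) = p \<and> right (meet p (right x)) = right x"
  unfolding interval_poset_def by (elim conjE) blast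

theorem mainTheorem10:
  fixes left right :: "'a::order \<Rightarrow> 'a" and p q :: 'a
  assumes "interval_domain left right"
    and "p \<in> maxD" and "q \<in> maxD"
  shows "(\<forall>S. S \<subseteq> left -` {p} \<longrightarrow> directed S \<longrightarrow>
            max_inf left right (right ` S) (right (dsup S))) \<and>
         (\<forall>S. S \<subseteq> right -` {q} \<longrightarrow> directed S \<longrightarrow>
            max_sup left right (left ` S) (left (dsup S)))"
proof -
  have ip: "interval_poset left right" and dc: "dcpo (UNIV::'a set)"
    using assms(1) unfolding interval_domain_def by auto
  have iiia: "\<And>p S q T. p \<in> maxD \<Longrightarrow> S \<subseteq> left -` {p} \<Longrightarrow> directed S \<Longrightarrow>
        left (dsup S) = p \<and>
        (q\<in>maxD \<longrightarrow> T \<subseteq> left -` {q} \<longrightarrow> directed T \<longrightarrow> right ` T = right ` S \<longrightarrow>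
           right (dsup S) = right (dsup T))"
  proof -
    have A: "\<forall>p\<in>maxD. \<forall>S. S \<subseteq> left -` {p} \<longrightarrow> directed S \<longrightarrow>
        left (dsup S) = p \<and>
        (\<forall>q\<in>maxD. \<forall>T. T \<subseteq> left -` {q} \<longrightarrow> directed T \<longrightarrow> right ` T = right ` S \<longrightarrow>
           right (dsup S) = right (dsup T))"
      using assms(1) unfolding interval_domain_def by (elim conjE) assumption
    fix p S q T assume h: "p \<in> maxD" "S \<subseteq> left -` {p}" "directed S"
    note B = A[rule_format, OF h]
    show "left (dsup S) = p \<and>
        (q\<in>maxD \<longrightarrow> T \<subseteq> left -` {q} \<longrightarrow> directed T \<longrightarrow> right ` T = right ` S \<longrightarrow>
           right (dsup S) = right (dsup T))"
      using B[THEN conjunct1] B[THEN conjunct2, rule_format] by iprover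
  qed
  have iiib: "\<And>p S q T. q \<in> maxD \<Longrightarrow> S \<subseteq> right -` {q} \<Longrightarrow> directed S \<Longrightarrow>
        right (dsup S) = q \<and>
        (p\<in>maxD \<longrightarrow> T \<subseteq> right -` {p} \<longrightarrow> directed T \<longrightarrow> left ` T = left ` S \<longrightarrow>
           left (dsup S) = left (dsup T))"
  proof -
    have A: "\<forall>q\<in>maxD. \<forall>S. S \<subseteq> right -` {q} \<longrightarrow> directed S \<longrightarrow>
        right (dsup S) = q \<and>
        (\<forall>p\<in>maxD. \<forall>T. T \<subseteq> right -` {p} \<longrightarrow> directed T \<longrightarrow> left ` T = left ` S \<longrightarrow>
           left (dsup S) = left (dsup T))"
      using assms(1) unfolding interval_domain_def by (elim conjE) assumption
    fix p S q T assume h: "q \<in> maxD" "S \<subseteq> right -` {q}" "directed S"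
    note B = A[rule_format, OF h]
    show "right (dsup S) = q \<and>
        (p\<in>maxD \<longrightarrow> T \<subseteq> right -` {p} \<longrightarrow> directed T \<longrightarrow> left ` T = left ` S \<longrightarrow>
           left (dsup S) = left (dsup T))"
      using B[THEN conjunct1] B[THEN conjunct2, rule_format] by iprover
  qed
  have ub: "\<And>(S::'a set) s. directed S \<Longrightarrow> s \<in> S \<Longrightarrow> s \<le> dsup S"
  proof -
    fix S s assume "directed (S::'a set)" "s \<in> S"
    then obtain u where "is_lub_in UNIV S u" using dc unfolding dcpo_def by blast
    then show "s \<le> dsup S" using lub_unique \<open>s \<in> S\<close> unfolding is_lub_in_def by metis
  qed
  show ?thesis
  proof (intro conjI allI impI)
    fix S assume S: "S \<subseteq> left -` {p}" "directed S"
    let ?u = "dsup S"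
    have m: "right ?u \<in> maxD" using ip_max[OF ip] by blast
    have lb: "max_le left right (right ?u) (right s)" if "s \<in> S" for s
    proof -
      have "s \<le> right ?u" using ub[OF S(2) that] ip_le[OF ip, of ?u] by (meson order_trans)
      from ip_3[OF ip m this] have "right ?u = left (meet (right ?u) (right s)) \<and>
         right s = right (meet (right ?u) (right s))" by simp
      then show ?thesis unfolding max_le_def
        using ip_max[OF ip, of s] m by (intro conjI exI[of _ "meet (right ?u) (right s)"]) simp_all
    qed
    have glb: "max_le left right n (right ?u)"
      if n: "n \<in> maxD" and nl: "\<forall>a\<in>right ` S. max_le left right n a" for n
    proof -
      define w where "w s = meet n (right s)" for s
      have w: "left (w s) = n \<and> right (w s) = right s" if "s \<in> S" for s
      proof -
        have "max_le left right n (right s)" using nl that by blast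
        then obtain z where z: "n = left z" "right s = right z" unfolding max_le_def by blast
        have "meet n (right s) = z" using ip_meet_eq[OF ip, of z n "right s"] z by simp
        then show ?thesis unfolding w_def using z by simp
      qed
      have mono: "w s \<le> w t" if "s \<in> S" "t \<in> S" "s \<le> t" for s t
      proof -
        have "s \<le> right t" using that(3) ip_le[OF ip, of t] by (meson order_trans)
        from ip_3[OF ip ip_max[OF ip, THEN conjunct2] this]
        have m1: "has_meet (right t) (right s) \<and> left (meet (right t) (right s)) = right t
           \<and> right (meet (right t) (right s)) = right s" by simp
        have "right (w t) = left (meet (right t) (right s))" using w[OF that(2)] m1 by simp
        from ip_comp[OF ip this]
        have c: "has_meet (w t) (meet (right t) (right s)) \<and>
          left (meet (w t) (meet (right t) (right s))) = n \<and>
          right (meet (w t) (meet (right t) (right s))) = right s"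
          using w[OF that(2)] m1 by simp
        have "meet n (right s) = meet (w t) (meet (right t) (right s))"
          using ip_meet_eq[OF ip, of "meet (w t) (meet (right t) (right s))" n "right s"] c by simp
        then have "w s = meet (w t) (meet (right t) (right s))" unfolding w_def .
        then show ?thesis using meet_le1[of "w t" "meet (right t) (right s)"] c by simp
      qed
      let ?T = "w ` S"
      have Td: "directed ?T" unfolding directed_def
      proof (intro conjI ballI)
        show "?T \<noteq> {}" using S(2) unfolding directed_def by simp
      next
        fix x y assume "x \<in> ?T" "y \<in> ?T"
        then obtain s1 s2 where s: "s1 \<in> S" "s2 \<in> S" "x = w s1" "y = w s2" by blast
        then obtain t where t: "t \<in> S" "s1 \<le> t" "s2 \<le> t" using S(2) unfolding directed_def by blast
        show "\<exists>z\<in>?T. x \<le> z \<and> y \<le> z"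
          using mono[OF s(1) t(1) t(2)] mono[OF s(2) t(1) t(3)] s t(1) by blast
      qed
      have Tl: "?T \<subseteq> left -` {n}" using w by auto
      have Tr: "right ` ?T = right ` S"
      proof -
        have "right ` ?T = (\<lambda>s. right (w s)) ` S" by (simp add: image_image)
        also have "\<dots> = right ` S" using w by (intro image_cong) simp_all
        finally show ?thesis .
      qed
      have l: "left (dsup ?T) = n" using iiia[OF n Tl Td] by (rule conjunct1)
      have r: "right ?u = right (dsup ?T)"
        using iiia[OF assms(2) S(1) S(2), of n ?T] n Tl Td Tr by simp
      show ?thesis unfolding max_le_def
        using n m l r by (intro conjI exI[of _ "dsup ?T"]) simp_all
    qed
    show "max_inf left right (right ` S) (right ?u)"
      unfolding max_inf_def using m lb glb by blast
  next
    fix S assume S: "S \<subseteq> right -` {q}" "directed S"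
    let ?u = "dsup S"
    have m: "left ?u \<in> maxD" using ip_max[OF ip] by blast
    have lb: "max_le left right (left s) (left ?u)" if "s \<in> S" for s
    proof -
      have "s \<le> left ?u" using ub[OF S(2) that] ip_le[OF ip, of ?u] by (meson order_trans)
      from ip_3[OF ip m this] have "left s = left (meet (left s) (left ?u)) \<and>
         left ?u = right (meet (left s) (left ?u))" by simp
      then show ?thesis unfolding max_le_def
        using ip_max[OF ip, of s] m by (intro conjI exI[of _ "meet (left s) (left ?u)"]) simp_all
    qed
    have lub: "max_le left right (left ?u) n"
      if n: "n \<in> maxD" and nl: "\<forall>a\<in>left ` S. max_le left right a n" for n
    proof -
      define w where "w s = meet (left s) n" for s
      have w: "left (w s) = left s \<and> right (w s) = n" if "s \<in> S" for s
      proof -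
        have "max_le left right (left s) n" using nl that by blast
        then obtain z where z: "left s = left z" "n = right z" unfolding max_le_def by blast
        have "meet (left s) n = z" using ip_meet_eq[OF ip, of z "left s" n] z by simp
        then show ?thesis unfolding w_def using z by simp
      qed
      have mono: "w s \<le> w t" if "s \<in> S" "t \<in> S" "s \<le> t" for s t
      proof -
        have "s \<le> left t" using that(3) ip_le[OF ip, of t] by (meson order_trans)
        from ip_3[OF ip ip_max[OF ip, THEN conjunct1] this]
        have m1: "has_meet (left s) (left t) \<and> left (meet (left s) (left t)) = left s
           \<and> right (meet (left s) (left t)) = left t" by simp
        have "right (meet (left s) (left t)) = left (w t)" using w[OF that(2)] m1 by simp
        from ip_comp[OF ip this]
        have c: "has_meet (meet (left s) (left t)) (w t) \<and>
          left (meet (meet (left s) (left t)) (w t)) = left s \<and>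
          right (meet (meet (left s) (left t)) (w t)) = n"
          using w[OF that(2)] m1 by simp
        have "meet (left s) n = meet (meet (left s) (left t)) (w t)"
          using ip_meet_eq[OF ip, of "meet (meet (left s) (left t)) (w t)" "left s" n] c by simp
        then have "w s = meet (meet (left s) (left t)) (w t)" unfolding w_def .
        then show ?thesis using meet_le2[of "meet (left s) (left t)" "w t"] c by simp
      qed
      let ?T = "w ` S"
      have Td: "directed ?T" unfolding directed_def
      proof (intro conjI ballI)
        show "?T \<noteq> {}" using S(2) unfolding directed_def by simp
      next
        fix x y assume "x \<in> ?T" "y \<in> ?T"
        then obtain s1 s2 where s: "s1 \<in> S" "s2 \<in> S" "x = w s1" "y = w s2" by blast
        then obtain t where t: "t \<in> S" "s1 \<le> t" "s2 \<le> t" using S(2) unfolding directed_def by blast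
        show "\<exists>z\<in>?T. x \<le> z \<and> y \<le> z"
          using mono[OF s(1) t(1) t(2)] mono[OF s(2) t(1) t(3)] s t(1) by blast
      qed
      have Tl: "?T \<subseteq> right -` {n}" using w by auto
      have Tr: "left ` ?T = left ` S"
      proof -
        have "left ` ?T = (\<lambda>s. left (w s)) ` S" by (simp add: image_image)
        also have "\<dots> = left ` S" using w by (intro image_cong) simp_all
        finally show ?thesis .
      qed
      have r: "right (dsup ?T) = n" using iiib[OF n Tl Td] by (rule conjunct1)
      have l: "left ?u = left (dsup ?T)"
        using iiib[OF assms(3) S(1) S(2), of n ?T] n Tl Td Tr by simp
      show ?thesis unfolding max_le_def
        using n m l r by (intro conjI exI[of _ "dsup ?T"]) simp_all
    qed
    show "max_sup left right (left ` S) (left ?u)"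
      unfolding max_sup_def using m lb lub by blast
  qed
qed

end
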